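(* Let $A_S$ be a parabolic-retractable Artin group with Coxeter matrix $(m_{s,t})_{s,t\in S}$, and let $a,b,c\in S$ be pairwise distinct with $m_{a,b}$, $m_{a,c}$ and $m_{b,c}$ all odd. Then $m_{b,c}$ divides $m_{a,b}$ or $m_{a,c}$.
   Context: A Coxeter matrix over a finite set $S$ is a matrix $M=(m_{s,t})_{s,t\in S}$ with entries in $\mathbb{N}\cup\{\infty\}$, $m_{s,s}=1$, and $m_{s,t}=m_{t,s}\ge 2$ for $s\neq t$. Write $\Pi(s,t,m)$ for the alternating word $sts\cdots$ of length $m$. The Artin group is $A_S=\langle S\mid \Pi(s,t,m_{s,t})=\Pi(t,s,m_{s,t})$ for $s\neq t$, $m_{s,t}\neq\infty\rangle$. For $X\subseteq S$, $A_X$ is the subgroup generated by $X$. A retraction of $G$ onto a subgroup $H$ is a homomorphism $\varphi:G\to H$ with $\varphi|_H=\mathrm{id}_H$. $A_S$ is parabolic-retractable if it admits a retraction onto $A_X$ for every $X\subseteq S$. "Odd" means a finite odd integer. *)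

theory Defs
  imports "HOL-Algebra.Generated_Groups" "HOL-Library.Extended_Nat"
begin

definition coxeter_matrix :: "'a set \<Rightarrow> ('a \<Rightarrow> 'a \<Rightarrow> enat) \<Rightarrow> bool" where
  "coxeter_matrix S M \<longleftrightarrow> finite S \<and> (\<forall>s\<in>S. M s s = 1) \<and>
     (\<forall>s\<in>S. \<forall>t\<in>S. s \<noteq> t \<longrightarrow> M s t = M t s \<and> M s t \<ge> 2)"

text \<open>Letters: (s, True) is the generator s, (s, False) its inverse.\<close>
type_synonym 'a letter = "'a \<times> bool"

definition inv_letter :: "'a letter \<Rightarrow> 'a letter" where
  "inv_letter l = (fst l, \<not> snd l)"

definition alt_word :: "'a \<Rightarrow> 'a \<Rightarrow> nat \<Rightarrow> 'a letter list" where
  "alt_word s t m = map (\<lambda>i. (if even i then s else t, True)) [0..<m]"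

definition words :: "'a set \<Rightarrow> 'a letter list set" where
  "words S = {w. set (map fst w) \<subseteq> S}"

inductive artin_eq :: "'a set \<Rightarrow> ('a \<Rightarrow> 'a \<Rightarrow> enat) \<Rightarrow> 'a letter list \<Rightarrow> 'a letter list \<Rightarrow> bool"
  for S M where
  refl: "artin_eq S M w w"
| sym: "artin_eq S M u w \<Longrightarrow> artin_eq S M w u"
| trans: "artin_eq S M u v \<Longrightarrow> artin_eq S M v w \<Longrightarrow> artin_eq S M u w"
| cancel: "artin_eq S M (u @ [l, inv_letter l] @ v) (u @ v)"
| braid: "s \<in> S \<Longrightarrow> t \<in> S \<Longrightarrow> s \<noteq> t \<Longrightarrow> M s t = enat m \<Longrightarrow>
     artin_eq S M (u @ alt_word s t m @ v) (u @ alt_word t s m @ v)"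

definition artin_class :: "'a set \<Rightarrow> ('a \<Rightarrow> 'a \<Rightarrow> enat) \<Rightarrow> 'a letter list \<Rightarrow> 'a letter list set" where
  "artin_class S M w = {v \<in> words S. artin_eq S M w v}"

definition artin_group :: "'a set \<Rightarrow> ('a \<Rightarrow> 'a \<Rightarrow> enat) \<Rightarrow> 'a letter list set monoid" where
  "artin_group S M = \<lparr> carrier = artin_class S M ` words S,
     mult = (\<lambda>A B. artin_class S M ((SOME a. a \<in> A) @ (SOME b. b \<in> B))),
     one = artin_class S M [] \<rparr>"

definition artin_gen :: "'a set \<Rightarrow> ('a \<Rightarrow> 'a \<Rightarrow> enat) \<Rightarrow> 'a \<Rightarrow> 'a letter list set" where
  "artin_gen S M s = artin_class S M [(s, True)]"

definition parabolic :: "'a set \<Rightarrow> ('a \<Rightarrow> 'a \<Rightarrow> enat) \<Rightarrow> 'a set \<Rightarrow> 'a letter list set set" where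
  "parabolic S M X = generate (artin_group S M) (artin_gen S M ` X)"

definition is_retraction :: "('g, 'c) monoid_scheme \<Rightarrow> 'g set \<Rightarrow> ('g \<Rightarrow> 'g) \<Rightarrow> bool" where
  "is_retraction G H \<phi> \<longleftrightarrow> \<phi> \<in> hom G (G\<lparr>carrier := H\<rparr>) \<and> (\<forall>h\<in>H. \<phi> h = h)"

definition parabolic_retractable :: "'a set \<Rightarrow> ('a \<Rightarrow> 'a \<Rightarrow> enat) \<Rightarrow> bool" where
  "parabolic_retractable S M \<longleftrightarrow>
     (\<forall>X \<subseteq> S. \<exists>\<phi>. is_retraction (artin_group S M) (parabolic S M X) \<phi>)"

definition odd_entry :: "enat \<Rightarrow> bool" where
  "odd_entry e \<longleftrightarrow> (\<exists>m. e = enat m \<and> odd m)"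

end

theory Submission
  imports Defs "HOL-Analysis.Complex_Transcendental"
begin


fun altf :: "('b \<Rightarrow> 'b) \<Rightarrow> ('b \<Rightarrow> 'b) \<Rightarrow> nat \<Rightarrow> 'b \<Rightarrow> 'b" where
  "altf f g 0 = id"
| "altf f g (Suc k) = f \<circ> altf g f k"

lemma altf_intertw:
  assumes "\<And>x. \<tau> (f x) = g (\<tau> x)" "\<And>x. \<tau> (g x) = f (\<tau> x)"
  shows "\<tau> (altf f g k x) = altf g f k (\<tau> x)"
  using assms
proof (induction k arbitrary: f g x)
  case 0 then show ?case by simp
next
  case (Suc k)
  have "\<tau> (altf f g (Suc k) x) = g (\<tau> (altf g f k x))" using Suc.prems by simp
  also have "\<tau> (altf g f k x) = altf f g k (\<tau> x)" using Suc.IH[of g f] Suc.prems by simp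
  finally show ?case by simp
qed

lemma funpow_intertw:
  assumes "\<And>x. h (\<tau> x) = \<tau> (h' x)" shows "(h ^^ k) (\<tau> x) = \<tau> ((h' ^^ k) x)"
  by (induction k) (simp_all add: assms)

lemma altf_pow:
  assumes "\<And>x. \<tau> (f x) = g (\<tau> x)" "\<And>x. \<tau> (g x) = f (\<tau> x)"
  shows "altf f g k ((\<tau> ^^ k) x) = ((\<lambda>y. f (\<tau> y)) ^^ k) x"
  using assms
proof (induction k arbitrary: f g x)
  case 0 then show ?case by simp
next
  case (Suc k)
  have "altf f g (Suc k) ((\<tau> ^^ Suc k) x) = f (altf g f k ((\<tau> ^^ k) (\<tau> x)))"
    by (simp add: funpow_Suc_right del: funpow.simps)
  also have "altf g f k ((\<tau> ^^ k) (\<tau> x)) = ((\<lambda>y. g (\<tau> y)) ^^ k) (\<tau> x)"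
    using Suc.IH[of g f] Suc.prems by simp
  also have "\<dots> = \<tau> (((\<lambda>y. f (\<tau> y)) ^^ k) x)"
    by (rule funpow_intertw) (simp add: Suc.prems)
  finally show ?case by simp
qed

lemma braid_tau:
  assumes "\<And>x. \<tau> (f x) = g (\<tau> x)" "\<And>x. \<tau> (g x) = f (\<tau> x)" "surj \<tau>"
    and "\<And>x. ((\<lambda>y. f (\<tau> y)) ^^ n) (\<tau> x) = \<tau> (((\<lambda>y. f (\<tau> y)) ^^ n) x)"
  shows "altf f g n = altf g f n"
proof -
  have A: "altf f g n ((\<tau> ^^ n) x) = ((\<lambda>y. f (\<tau> y)) ^^ n) x" for x by (rule altf_pow[of \<tau> f g, OF assms(1,2)])
  have B: "altf g f n ((\<tau> ^^ n) x) = ((\<lambda>y. g (\<tau> y)) ^^ n) x" for x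
    by (rule altf_pow[of \<tau> g f, OF assms(2,1)])
  have C: "((\<lambda>y. g (\<tau> y)) ^^ n) (\<tau> x) = \<tau> (((\<lambda>y. f (\<tau> y)) ^^ n) x)" for x
    by (rule funpow_intertw) (simp add: assms(1))
  have D: "((\<lambda>y. g (\<tau> y)) ^^ n) z = ((\<lambda>y. f (\<tau> y)) ^^ n) z" for z
  proof -
    obtain x where "z = \<tau> x" using assms(3) by (metis surjD)
    then show ?thesis using C assms(4) by simp
  qed
  have su: "surj (\<tau> ^^ n)" using assms(3) by simp
  show ?thesis
  proof (rule ext)
    fix z obtain x where "z = (\<tau> ^^ n) x" using su by (metis surjD)
    then show "altf f g n z = altf g f n z" using A B D by simp
  qed
qed



definition fS :: "complex \<Rightarrow> complex \<Rightarrow> complex \<Rightarrow> complex \<times> complex \<Rightarrow> complex \<times> complex" where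
  "fS l x a = (\<lambda>(p,q). (l*p + x*q + a, q))"
definition fT :: "complex \<Rightarrow> complex \<Rightarrow> complex \<Rightarrow> complex \<times> complex \<Rightarrow> complex \<times> complex" where
  "fT l x a = (\<lambda>(p,q). (p, l*q + x*p + a))"

lemma model_G1:
  fixes l x a1 a2 \<mu>1 \<mu>2 :: complex
  assumes s: "\<mu>1 + \<mu>2 = x" and p: "\<mu>1*\<mu>2 = -l" and ne: "\<mu>1 \<noteq> \<mu>2" and pw: "\<mu>1^n = \<mu>2^n"
    and D: "(l-1)^2 \<noteq> x^2"
  shows "altf (fS l x a1) (fT l x a2) n = altf (fT l x a2) (fS l x a1) n"
proof -
  define D where "D = (l-1)^2 - x^2"
  have D0: "D \<noteq> 0" using D unfolding D_def by simp
  define N1 where "N1 = x*a2 - (l-1)*a1"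
  define N2 where "N2 = x*a1 - (l-1)*a2"
  define ps where "ps = N1/D"
  define qs where "qs = N2/D"
  have e1: "(l-1)*N1 + x*N2 = -a1*D" unfolding D_def N1_def N2_def power2_eq_square by algebra
  have e2: "x*N1 + (l-1)*N2 = -a2*D" unfolding D_def N1_def N2_def power2_eq_square by algebra
  have "(l-1)*ps + x*qs = ((l-1)*N1 + x*N2)/D" unfolding ps_def qs_def by (simp add: add_divide_distrib)
  also have "\<dots> = -a1" using e1 D0 by simp
  finally have F1: "(l-1)*ps + x*qs + a1 = 0" by simp
  have "x*ps + (l-1)*qs = (x*N1 + (l-1)*N2)/D" unfolding ps_def qs_def by (simp add: add_divide_distrib)
  also have "\<dots> = -a2" using e2 D0 by simp
  finally have F2: "x*ps + (l-1)*qs + a2 = 0" by simp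
  define \<tau> where "\<tau> = (\<lambda>(p::complex,q::complex). (q - qs + ps, p - ps + qs))"
  have su: "surj \<tau>"
  proof -
    have "\<tau> (\<tau> z) = z" for z by (cases z) (simp add: \<tau>_def)
    then show ?thesis by (metis surjI)
  qed
  have i1: "\<tau> (fS l x a1 z) = fT l x a2 (\<tau> z)" for z
  proof (cases z)
    case (Pair p q)
    have "l*p + x*q + a1 - ps + qs = l*(p - ps + qs) + x*(q - qs + ps) + a2"
      using F1 F2 by algebra
    then show ?thesis using Pair by (simp add: \<tau>_def fS_def fT_def)
  qed
  have i2: "\<tau> (fT l x a2 z) = fS l x a1 (\<tau> z)" for z
  proof (cases z)
    case (Pair p q)
    have "l*q + x*p + a2 - qs + ps = l*(q - qs + ps) + x*(p - ps + qs) + a1"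
      using F1 F2 by algebra
    then show ?thesis using Pair by (simp add: \<tau>_def fS_def fT_def)
  qed
  define X where "X = (\<lambda>y. fS l x a1 (\<tau> y))"
  have sq1: "\<mu>1*\<mu>1 = x*\<mu>1 + l"
  proof -
    have "x*\<mu>1 + l = (\<mu>1+\<mu>2)*\<mu>1 - \<mu>1*\<mu>2" using s p by simp
    then show ?thesis by (simp add: algebra_simps)
  qed
  have sq2: "\<mu>2*\<mu>2 = x*\<mu>2 + l"
  proof -
    have "x*\<mu>2 + l = (\<mu>1+\<mu>2)*\<mu>2 - \<mu>1*\<mu>2" using s p by simp
    then show ?thesis by (simp add: algebra_simps)
  qed
  have cf: "(X ^^ k) (ps + c1*\<mu>1 + c2*\<mu>2, qs + c1 + c2)
      = (ps + c1*\<mu>1^(k+1) + c2*\<mu>2^(k+1), qs + c1*\<mu>1^k + c2*\<mu>2^k)" for k c1 c2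
  proof (induction k)
    case 0 then show ?case by simp
  next
    case (Suc k)
    have e: "l*(ps + (c1*\<mu>1^k + c2*\<mu>2^k)) + x*(qs + (c1*\<mu>1^(k+1) + c2*\<mu>2^(k+1))) + a1
        = ps + (c1*\<mu>1^(Suc k+1) + c2*\<mu>2^(Suc k+1))"
    proof -
      have a: "c1*\<mu>1^(Suc k+1) = c1*\<mu>1^k*(\<mu>1*\<mu>1)" by (simp add: power_add)
      have b: "c2*\<mu>2^(Suc k+1) = c2*\<mu>2^k*(\<mu>2*\<mu>2)" by (simp add: power_add)
      have c: "x*(c1*\<mu>1^(k+1)) = c1*\<mu>1^k*(x*\<mu>1)" "x*(c2*\<mu>2^(k+1)) = c2*\<mu>2^k*(x*\<mu>2)"
        by (simp_all add: power_add)
      show ?thesis unfolding a b sq1 sq2 distrib_left c using F1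
        by (simp add: algebra_simps)
    qed
    have "(X ^^ Suc k) (ps + c1*\<mu>1 + c2*\<mu>2, qs + c1 + c2) =
       X (ps + c1*\<mu>1^(k+1) + c2*\<mu>2^(k+1), qs + c1*\<mu>1^k + c2*\<mu>2^k)" using Suc by simp
    also have "\<dots> = (l*(ps + (c1*\<mu>1^k + c2*\<mu>2^k)) + x*(qs + (c1*\<mu>1^(k+1) + c2*\<mu>2^(k+1))) + a1,
                     qs + (c1*\<mu>1^(k+1) + c2*\<mu>2^(k+1)))"
      by (simp add: X_def \<tau>_def fS_def algebra_simps)
    finally show ?case unfolding e by (simp add: algebra_simps)
  qed
  have Xn: "(X ^^ n) (p,q) = (ps + \<mu>1^n*(p-ps), qs + \<mu>1^n*(q-qs))" for p q
  proof -
    define c1 where "c1 = (p - ps - \<mu>2*(q - qs))/(\<mu>1-\<mu>2)"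
    define c2 where "c2 = (\<mu>1*(q-qs) - (p - ps))/(\<mu>1-\<mu>2)"
    have m0: "\<mu>1 - \<mu>2 \<noteq> 0" using ne by simp
    have pp: "p = ps + c1*\<mu>1 + c2*\<mu>2"
    proof -
      have "c1*\<mu>1 + c2*\<mu>2 = ((p - ps - \<mu>2*(q - qs))*\<mu>1 + (\<mu>1*(q-qs) - (p - ps))*\<mu>2)/(\<mu>1-\<mu>2)"
        unfolding c1_def c2_def by (simp add: add_divide_distrib)
      also have "(p - ps - \<mu>2*(q - qs))*\<mu>1 + (\<mu>1*(q-qs) - (p - ps))*\<mu>2 = (p - ps)*(\<mu>1-\<mu>2)"
        by algebra
      finally have "c1*\<mu>1 + c2*\<mu>2 = p - ps" using m0 by simp
      then show ?thesis by (simp add: algebra_simps)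
    qed
    have qq: "q = qs + c1 + c2"
    proof -
      have "c1 + c2 = ((p - ps - \<mu>2*(q - qs)) + (\<mu>1*(q-qs) - (p - ps)))/(\<mu>1-\<mu>2)"
        unfolding c1_def c2_def by (simp only: add_divide_distrib)
      also have "(p - ps - \<mu>2*(q - qs)) + (\<mu>1*(q-qs) - (p - ps)) = (q - qs)*(\<mu>1-\<mu>2)"
        by algebra
      finally have "c1 + c2 = q - qs" using m0 by simp
      then show ?thesis by (simp add: algebra_simps)
    qed
    have "(X ^^ n) (p,q) = (ps + c1*\<mu>1^(n+1) + c2*\<mu>2^(n+1), qs + c1*\<mu>1^n + c2*\<mu>2^n)"
      using cf[of n c1 c2] pp qq by simp
    also have "\<dots> = (ps + \<mu>1^n*(c1*\<mu>1 + c2*\<mu>2), qs + \<mu>1^n*(c1 + c2))"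
      using pw by (simp add: algebra_simps)
    finally show ?thesis using pp qq by simp
  qed
  have comm: "(X ^^ n) (\<tau> z) = \<tau> ((X ^^ n) z)" for z
    by (cases z) (simp add: Xn \<tau>_def algebra_simps)
  show ?thesis by (rule braid_tau[of \<tau> "fS l x a1" "fT l x a2", OF i1 i2 su]) (use comm X_def in simp)
qed



lemma geo_shift: "(\<Sum>i<Suc k. (b::complex)^i) = 1 + b*(\<Sum>i<k. b^i)"
  by (subst sum.lessThan_Suc_shift) (simp add: sum_distrib_left)

lemma model_G2:
  fixes l a1 a2 :: complex
  assumes bn: "(-l)^n = 1" and b1: "-l \<noteq> 1" and l1: "l \<noteq> 1"
  shows "altf (fS l (1-l) a1) (fT l (1-l) a2) n = altf (fT l (1-l) a2) (fS l (1-l) a1) n"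
proof -
  define \<beta> where "\<beta> = -l"
  define \<delta> where "\<delta> = (a2 - a1)/(1-l)"
  have hd: "(1-l)*\<delta> = a2 - a1" using l1 unfolding \<delta>_def by simp
  define \<tau> where "\<tau> = (\<lambda>(p::complex,q::complex). (q, p + \<delta>))"
  have su: "surj \<tau>"
  proof -
    have "\<tau> ((\<lambda>(p,q). (q - \<delta>, p)) z) = z" for z by (cases z) (simp add: \<tau>_def)
    then show ?thesis by (rule surjI)
  qed
  have i1: "\<tau> (fS l (1-l) a1 z) = fT l (1-l) a2 (\<tau> z)" for z
  proof (cases z)
    case (Pair p q)
    have "l*p + (1-l)*q + a1 + \<delta> = l*(p + \<delta>) + (1-l)*q + a2" using hd by algebra
    then show ?thesis using Pair by (simp add: \<tau>_def fS_def fT_def)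
  qed
  have i2: "\<tau> (fT l (1-l) a2 z) = fS l (1-l) a1 (\<tau> z)" for z
  proof (cases z)
    case (Pair p q)
    have "l*q + (1-l)*p + a2 = l*q + (1-l)*(p + \<delta>) + a1" using hd by algebra
    then show ?thesis using Pair by (simp add: \<tau>_def fS_def fT_def)
  qed
  define X where "X = (\<lambda>y. fS l (1-l) a1 (\<tau> y))"
  define S where "S = (\<lambda>k. \<Sum>i<k. \<beta>^i)"
  define T where "T = (\<lambda>k. \<Sum>j<k. S j)"
  define e where "e = a1 - l*\<delta>"
  have cf: "(X ^^ k) (p,q) = (q + (S k*(p-q) + T k*e + of_nat k*\<delta>) + (\<beta>^k*(p-q) + S k*e),
                             q + (S k*(p-q) + T k*e + of_nat k*\<delta>))" for k p q
  proof (induction k)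
    case 0 then show ?case by (simp add: S_def T_def)
  next
    case (Suc k)
    have S1: "S (Suc k) = S k + \<beta>^k" "S (Suc k) = 1 + \<beta> * S k"
      unfolding S_def by (simp, rule geo_shift)
    have T1: "T (Suc k) = T k + S k" by (simp add: T_def)
    define Qk where "Qk = S k*(p-q) + T k*e + of_nat k*\<delta>"
    define dk where "dk = \<beta>^k*(p-q) + S k*e"
    have "(X ^^ Suc k) (p,q) = X (q + Qk + dk, q + Qk)" using Suc by (simp add: Qk_def dk_def)
    also have "\<dots> = (l*(q + Qk) + (1-l)*(q + Qk + dk + \<delta>) + a1, q + Qk + dk + \<delta>)"
      by (simp add: X_def \<tau>_def fS_def)
    also have "l*(q + Qk) + (1-l)*(q + Qk + dk + \<delta>) + a1 = (q + Qk + dk + \<delta>) + (\<beta>*dk + e)"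
      by (simp add: \<beta>_def e_def algebra_simps)
    also have "\<beta>*dk + e = \<beta>^Suc k*(p-q) + S (Suc k)*e"
      by (simp add: dk_def S1(2) algebra_simps)
    finally have h: "(X ^^ Suc k) (p,q) = (q + Qk + dk + \<delta> + (\<beta>^Suc k*(p-q) + S (Suc k)*e), q + Qk + dk + \<delta>)" .
    have "q + Qk + dk + \<delta> = q + (S (Suc k)*(p-q) + T (Suc k)*e + of_nat (Suc k)*\<delta>)"
      by (simp add: Qk_def dk_def S1(1) T1 algebra_simps)
    then show ?case using h by simp
  qed
  have Sn: "S n = 0"
  proof -
    have "1 - \<beta>^n = (1 - \<beta>) * S n" unfolding S_def by (rule one_diff_power_eq)
    moreover have "\<beta>^n = 1" using bn \<beta>_def by simp
    moreover have "1 - \<beta> \<noteq> 0" using b1 unfolding \<beta>_def by (metis eq_iff_diff_eq_0)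
    ultimately show ?thesis by simp
  qed
  have bn': "\<beta>^n = 1" using bn \<beta>_def by simp
  define W where "W = T n*e + of_nat n*\<delta>"
  have Xn: "(X ^^ n) (p,q) = (p + W, q + W)" for p q
    using cf[of n p q] Sn bn' by (simp add: W_def algebra_simps)
  have comm: "(X ^^ n) (\<tau> z) = \<tau> ((X ^^ n) z)" for z
    by (cases z) (simp add: Xn \<tau>_def algebra_simps)
  show ?thesis
    by (rule braid_tau[of \<tau> "fS l (1-l) a1" "fT l (1-l) a2", OF i1 i2 su]) (use comm X_def in simp)
qed



definition sig :: "'a set \<Rightarrow> ('a \<Rightarrow> 'a \<Rightarrow> complex) \<Rightarrow> complex \<Rightarrow> 'a \<Rightarrow> ('a \<Rightarrow> complex) \<Rightarrow> ('a \<Rightarrow> complex)" where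
  "sig S K l s v = v(s := l * v s + (\<Sum>u\<in>S-{s}. K s u * v u))"
definition sigi :: "'a set \<Rightarrow> ('a \<Rightarrow> 'a \<Rightarrow> complex) \<Rightarrow> complex \<Rightarrow> 'a \<Rightarrow> ('a \<Rightarrow> complex) \<Rightarrow> ('a \<Rightarrow> complex)" where
  "sigi S K l s v = v(s := (v s - (\<Sum>u\<in>S-{s}. K s u * v u)) / l)"

lemma sum_upd_other: "(\<Sum>u\<in>S-{s}. K s u * (v(s := y)) u) = (\<Sum>u\<in>S-{s}. K s u * v u)"
  by (rule sum.cong) auto

lemma sig_sigi: "l \<noteq> 0 \<Longrightarrow> sig S K l s (sigi S K l s v) = v"
  by (simp add: sig_def sigi_def sum_upd_other fun_eq_iff)

lemma sigi_sig: "l \<noteq> 0 \<Longrightarrow> sigi S K l s (sig S K l s v) = v"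
  by (simp add: sig_def sigi_def sum_upd_other fun_eq_iff)

definition ev :: "'a set \<Rightarrow> ('a \<Rightarrow> 'a \<Rightarrow> complex) \<Rightarrow> complex \<Rightarrow> 'a letter \<Rightarrow> ('a \<Rightarrow> complex) \<Rightarrow> ('a \<Rightarrow> complex)" where
  "ev S K l x = (if snd x then sig S K l (fst x) else sigi S K l (fst x))"

definition evw :: "'a set \<Rightarrow> ('a \<Rightarrow> 'a \<Rightarrow> complex) \<Rightarrow> complex \<Rightarrow> 'a letter list \<Rightarrow> ('a \<Rightarrow> complex) \<Rightarrow> ('a \<Rightarrow> complex)" where
  "evw S K l w = foldr (\<lambda>x f. ev S K l x \<circ> f) w id"

lemma evw_Nil[simp]: "evw S K l [] = id" by (simp add: evw_def)
lemma evw_Cons[simp]: "evw S K l (x # w) = ev S K l x \<circ> evw S K l w" by (simp add: evw_def)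
lemma evw_append[simp]: "evw S K l (u @ w) = evw S K l u \<circ> evw S K l w"
  by (induction u) (simp_all add: comp_assoc)

lemma ev_inv: "l \<noteq> 0 \<Longrightarrow> ev S K l x \<circ> ev S K l (inv_letter x) = id"
  by (cases x) (auto simp: ev_def inv_letter_def fun_eq_iff sig_sigi sigi_sig)

lemma alt_word_Suc: "alt_word s t (Suc k) = (s, True) # alt_word t s k"
  by (simp only: alt_word_def map_upt_Suc) simp

lemma alt_word_0: "alt_word s t 0 = []"
  by (simp add: alt_word_def)

lemma evw_alt: "evw S K l (alt_word s t k) = altf (sig S K l s) (sig S K l t) k"
  by (induction k arbitrary: s t) (simp_all add: alt_word_Suc alt_word_0 ev_def)

lemma ev_inv': "l \<noteq> 0 \<Longrightarrow> ev S K l x (ev S K l (inv_letter x) y) = y"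
  using ev_inv[of l S K x] by (metis comp_apply id_apply)

lemma evw_inv:
  assumes "l \<noteq> 0"
    and br: "\<And>s t m. s \<in> S \<Longrightarrow> t \<in> S \<Longrightarrow> s \<noteq> t \<Longrightarrow> M s t = enat m \<Longrightarrow>
       altf (sig S K l s) (sig S K l t) m = altf (sig S K l t) (sig S K l s) m"
  shows "artin_eq S M u w \<Longrightarrow> evw S K l u = evw S K l w"
proof (induction rule: artin_eq.induct)
  case (cancel u x v)
  have "\<And>y. ev S K l x (ev S K l (inv_letter x) y) = y" using ev_inv'[OF assms(1)] by blast
  then show ?case by (simp add: comp_def)
next
  case (braid s t m u v)
  then show ?case using br[of s t m] by (simp add: evw_alt)
qed simp_all

definition Aof :: "'a set \<Rightarrow> ('a \<Rightarrow> 'a \<Rightarrow> complex) \<Rightarrow> 'a \<Rightarrow> 'a \<Rightarrow> ('a \<Rightarrow> complex) \<Rightarrow> complex" where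
  "Aof S K s t v = (\<Sum>u\<in>S-{s,t}. K s u * v u)"

lemma Aof_upd: "Aof S K s t (v(s := p, t := q)) = Aof S K s t v"
  unfolding Aof_def by (rule sum.cong) auto

lemma Aof_upd': "Aof S K s t (v(t := q, s := p)) = Aof S K s t v"
  unfolding Aof_def by (rule sum.cong) auto

lemma sig_upd:
  assumes "finite S" "s \<in> S" "t \<in> S" "s \<noteq> t"
  shows "sig S K l s (v(s := p, t := q)) =
     (\<lambda>(p', q'). v(s := p', t := q')) (fS l (K s t) (Aof S K s t v) (p, q))"
proof -
  have "(\<Sum>u\<in>S-{s}. K s u * (v(s := p, t := q)) u) =
        K s t * q + (\<Sum>u\<in>S-{s}-{t}. K s u * (v(s := p, t := q)) u)"
    using assms by (subst sum.remove[of _ t]) auto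
  also have "(\<Sum>u\<in>S-{s}-{t}. K s u * (v(s := p, t := q)) u) = Aof S K s t v"
    unfolding Aof_def by (rule sum.cong) auto
  finally have sm: "(\<Sum>u\<in>S-{s}. K s u * (v(s := p, t := q)) u) = K s t * q + Aof S K s t v" .
  have "sig S K l s (v(s := p, t := q)) = (v(s := p, t := q))(s := l * p + (K s t * q + Aof S K s t v))"
    unfolding sig_def sm using assms(4) by simp
  also have "\<dots> = v(s := l * p + K s t * q + Aof S K s t v, t := q)"
    using assms(4) by (simp add: fun_upd_twist add.assoc)
  finally show ?thesis by (simp add: fS_def)
qed

lemma pair_red:
  assumes "finite S" "s \<in> S" "t \<in> S" "s \<noteq> t"
  shows "altf (sig S K l s) (sig S K l t) k v =
      (\<lambda>(p', q'). v(s := p', t := q'))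
        (altf (fS l (K s t) (Aof S K s t v)) (fT l (K t s) (Aof S K t s v)) k (v s, v t))
   \<and> altf (sig S K l t) (sig S K l s) k v =
      (\<lambda>(p', q'). v(s := p', t := q'))
        (altf (fT l (K t s) (Aof S K t s v)) (fS l (K s t) (Aof S K s t v)) k (v s, v t))"
proof (induction k arbitrary: v)
  case 0
  then show ?case by (simp add: fun_eq_iff)
next
  case (Suc k)
  define F where "F = fS l (K s t) (Aof S K s t v)"
  define G where "G = fT l (K t s) (Aof S K t s v)"
  have sS: "sig S K l s (v(s := p, t := q)) = (\<lambda>(p', q'). v(s := p', t := q')) (F (p, q))" for p q
    unfolding F_def by (rule sig_upd[OF assms])
  have sT: "sig S K l t (v(s := p, t := q)) = (\<lambda>(p', q'). v(s := p', t := q')) (G (p, q))" for p q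
  proof -
    have "v(s := p, t := q) = v(t := q, s := p)" using assms(4) by (rule fun_upd_twist)
    then have "sig S K l t (v(s := p, t := q)) = (\<lambda>(q', p'). v(t := q', s := p'))
        (fS l (K t s) (Aof S K t s v) (q, p))"
      using sig_upd[of S t s K l v q p] assms by simp
    then show ?thesis unfolding G_def
      by (simp add: fS_def fT_def fun_upd_twist[OF assms(4)] algebra_simps)
  qed
  have IH1: "altf (sig S K l t) (sig S K l s) k v = (\<lambda>(p', q'). v(s := p', t := q')) (altf G F k (v s, v t))"
    using Suc.IH F_def G_def by blast
  have IH2: "altf (sig S K l s) (sig S K l t) k v = (\<lambda>(p', q'). v(s := p', t := q')) (altf F G k (v s, v t))"
    using Suc.IH F_def G_def by blast
  show ?case
  proof
    obtain p q where pq: "altf G F k (v s, v t) = (p, q)" by fastforce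
    show "altf (sig S K l s) (sig S K l t) (Suc k) v =
      (\<lambda>(p', q'). v(s := p', t := q')) (altf (fS l (K s t) (Aof S K s t v)) (fT l (K t s) (Aof S K t s v)) (Suc k) (v s, v t))"
      using IH1 pq sS[of p q] F_def G_def by simp
  next
    obtain p q where pq: "altf F G k (v s, v t) = (p, q)" by fastforce
    show "altf (sig S K l t) (sig S K l s) (Suc k) v =
      (\<lambda>(p', q'). v(s := p', t := q')) (altf (fT l (K t s) (Aof S K t s v)) (fS l (K s t) (Aof S K s t v)) (Suc k) (v s, v t))"
      using IH2 pq sT[of p q] F_def G_def by simp
  qed
qed

lemma pair_braid:
  assumes "finite S" "s \<in> S" "t \<in> S" "s \<noteq> t"
    and "\<And>a1 a2. altf (fS l (K s t) a1) (fT l (K t s) a2) n = altf (fT l (K t s) a2) (fS l (K s t) a1) n"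
  shows "altf (sig S K l s) (sig S K l t) n = altf (sig S K l t) (sig S K l s) n"
proof
  fix v show "altf (sig S K l s) (sig S K l t) n v = altf (sig S K l t) (sig S K l s) n v"
    using pair_red[OF assms(1-4), of K l n v] assms(5) by simp
qed

lemma altf_comm_even:
  assumes "\<And>z. f (g z) = g (f z)"
  shows "altf f g (2*j) = altf g f (2*j)"
proof (induction j)
  case 0 then show ?case by simp
next
  case (Suc j)
  have "altf f g (2*Suc j) = f \<circ> g \<circ> altf f g (2*j)" by (simp add: comp_assoc)
  also have "\<dots> = g \<circ> f \<circ> altf g f (2*j)" using Suc assms by (simp add: fun_eq_iff)
  also have "\<dots> = altf g f (2*Suc j)" by (simp add: comp_assoc)
  finally show ?case .
qed

lemma model_even:
  assumes "even n"
  shows "altf (fS l 0 a1) (fT l 0 a2) n = altf (fT l 0 a2) (fS l 0 a1) n"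
proof -
  obtain j where "n = 2*j" using assms by blast
  moreover have "fS l 0 a1 (fT l 0 a2 z) = fT l 0 a2 (fS l 0 a1 z)" for z
    by (cases z) (simp add: fS_def fT_def)
  ultimately show ?thesis using altf_comm_even by metis
qed



lemma artin_cong: "artin_eq S M u v \<Longrightarrow> artin_eq S M (x @ u @ y) (x @ v @ y)"
proof (induction rule: artin_eq.induct)
  case (refl w) show ?case by (rule artin_eq.refl)
next
  case (sym u w) show ?case by (rule artin_eq.sym[OF sym.IH])
next
  case (trans u v w) show ?case by (rule artin_eq.trans[OF trans.IH(1) trans.IH(2)])
next
  case (cancel u l v)
  show ?case using artin_eq.cancel[of S M "x@u" l "v@y"] by simp
next
  case (braid s t m u v)
  show ?case using artin_eq.braid[of s S t M m "x@u" "v@y"] braid.hyps by simp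
qed

lemma artin_app: "artin_eq S M u u' \<Longrightarrow> artin_eq S M v v' \<Longrightarrow> artin_eq S M (u @ v) (u' @ v')"
proof -
  assume a: "artin_eq S M u u'" "artin_eq S M v v'"
  have "artin_eq S M ([] @ u @ v) ([] @ u' @ v)" using a(1) by (rule artin_cong)
  moreover have "artin_eq S M (u' @ v @ []) (u' @ v' @ [])" using a(2) by (rule artin_cong)
  ultimately show ?thesis using artin_eq.trans[of S M "u @ v" "u' @ v" "u' @ v'"] by simp
qed

lemma words_append: "u \<in> words S \<Longrightarrow> v \<in> words S \<Longrightarrow> u @ v \<in> words S"
  by (auto simp: words_def)

lemma words_Nil: "[] \<in> words S" by (simp add: words_def)

lemma class_self: "w \<in> words S \<Longrightarrow> w \<in> artin_class S M w"
  by (simp add: artin_class_def artin_eq.refl)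

lemma class_eq: "artin_eq S M u v \<Longrightarrow> artin_class S M u = artin_class S M v"
proof -
  assume a: "artin_eq S M u v"
  have "artin_eq S M u w \<longleftrightarrow> artin_eq S M v w" for w
  proof
    assume "artin_eq S M u w" then show "artin_eq S M v w" by (rule artin_eq.trans[OF artin_eq.sym[OF a]])
  next
    assume "artin_eq S M v w" then show "artin_eq S M u w" by (rule artin_eq.trans[OF a])
  qed
  then show ?thesis unfolding artin_class_def by simp
qed


lemma some_class:
  assumes "w \<in> words S"
  shows "(SOME a. a \<in> artin_class S M w) \<in> words S \<and> artin_eq S M w (SOME a. a \<in> artin_class S M w)"
proof -
  have "(SOME a. a \<in> artin_class S M w) \<in> artin_class S M w"
    using class_self[OF assms] by (rule someI)
  then show ?thesis unfolding artin_class_def by simp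
qed

lemma mult_class:
  assumes "u \<in> words S" "v \<in> words S"
  shows "artin_class S M u \<otimes>\<^bsub>artin_group S M\<^esub> artin_class S M v = artin_class S M (u @ v)"
proof -
  have "artin_eq S M (u @ v) ((SOME a. a \<in> artin_class S M u) @ (SOME a. a \<in> artin_class S M v))"
    using some_class[OF assms(1), of M] some_class[OF assms(2), of M] artin_app by blast
  then have "artin_class S M (u @ v) = artin_class S M ((SOME a. a \<in> artin_class S M u) @ (SOME a. a \<in> artin_class S M v))"
    by (rule class_eq)
  then show ?thesis by (simp add: artin_group_def)
qed

lemma carrier_ag: "carrier (artin_group S M) = artin_class S M ` words S"
  by (simp add: artin_group_def)

lemma one_ag: "\<one>\<^bsub>artin_group S M\<^esub> = artin_class S M []"
  by (simp add: artin_group_def)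

definition invw :: "'a letter list \<Rightarrow> 'a letter list" where
  "invw w = rev (map inv_letter w)"

lemma invw_words: "w \<in> words S \<Longrightarrow> invw w \<in> words S"
  by (auto simp: words_def invw_def inv_letter_def)

lemma invw_cancel: "artin_eq S M (invw w @ w) []"
proof (induction w)
  case Nil then show ?case by (simp add: invw_def artin_eq.refl)
next
  case (Cons x w)
  have "invw (x # w) @ x # w = invw w @ [inv_letter x, inv_letter (inv_letter x)] @ w"
    by (simp add: invw_def inv_letter_def)
  moreover have "artin_eq S M (invw w @ [inv_letter x, inv_letter (inv_letter x)] @ w) (invw w @ w)"
    by (rule artin_eq.cancel)
  ultimately show ?case using Cons.IH artin_eq.trans[of S M "invw (x # w) @ x # w" "invw w @ w" "[]"] by simp
qed

lemma group_ag: "group (artin_group S M)"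
proof (rule groupI)
  fix x y assume "x \<in> carrier (artin_group S M)" "y \<in> carrier (artin_group S M)"
  then obtain u v where "u \<in> words S" "v \<in> words S" "x = artin_class S M u" "y = artin_class S M v"
    by (auto simp: carrier_ag)
  then show "x \<otimes>\<^bsub>artin_group S M\<^esub> y \<in> carrier (artin_group S M)"
    by (simp add: mult_class carrier_ag words_append)
next
  show "\<one>\<^bsub>artin_group S M\<^esub> \<in> carrier (artin_group S M)"
    by (simp add: one_ag carrier_ag words_Nil)
next
  fix x y z assume "x \<in> carrier (artin_group S M)" "y \<in> carrier (artin_group S M)" "z \<in> carrier (artin_group S M)"
  then obtain u v w where "u \<in> words S" "v \<in> words S" "w \<in> words S"
    "x = artin_class S M u" "y = artin_class S M v" "z = artin_class S M w"
    by (auto simp: carrier_ag)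
  then show "x \<otimes>\<^bsub>artin_group S M\<^esub> y \<otimes>\<^bsub>artin_group S M\<^esub> z = x \<otimes>\<^bsub>artin_group S M\<^esub> (y \<otimes>\<^bsub>artin_group S M\<^esub> z)"
    by (simp add: mult_class words_append)
next
  fix x assume "x \<in> carrier (artin_group S M)"
  then obtain u where "u \<in> words S" "x = artin_class S M u" by (auto simp: carrier_ag)
  then show "\<one>\<^bsub>artin_group S M\<^esub> \<otimes>\<^bsub>artin_group S M\<^esub> x = x"
    by (simp add: one_ag mult_class words_Nil)
next
  fix x assume "x \<in> carrier (artin_group S M)"
  then obtain u where u: "u \<in> words S" "x = artin_class S M u" by (auto simp: carrier_ag)
  have "artin_class S M (invw u) \<otimes>\<^bsub>artin_group S M\<^esub> x = \<one>\<^bsub>artin_group S M\<^esub>"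
    using u by (simp add: mult_class invw_words one_ag class_eq invw_cancel)
  moreover have "artin_class S M (invw u) \<in> carrier (artin_group S M)"
    using u by (simp add: carrier_ag invw_words)
  ultimately show "\<exists>y\<in>carrier (artin_group S M). y \<otimes>\<^bsub>artin_group S M\<^esub> x = \<one>\<^bsub>artin_group S M\<^esub>" by blast
qed

definition thC :: "'a set \<Rightarrow> ('a \<Rightarrow> 'a \<Rightarrow> complex) \<Rightarrow> complex \<Rightarrow> 'a letter list set \<Rightarrow> ('a \<Rightarrow> complex) \<Rightarrow> ('a \<Rightarrow> complex)" where
  "thC S K l A = evw S K l (SOME a. a \<in> A)"

lemma thC_class:
  assumes inv: "\<And>u w. artin_eq S M u w \<Longrightarrow> evw S K l u = evw S K l w" and "w \<in> words S"
  shows "thC S K l (artin_class S M w) = evw S K l w"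
proof -
  have "artin_eq S M w (SOME a. a \<in> artin_class S M w)" using some_class[OF assms(2), of M] by blast
  then show ?thesis unfolding thC_def using inv by metis
qed

fun altG :: "('c, 'd) monoid_scheme \<Rightarrow> 'c \<Rightarrow> 'c \<Rightarrow> nat \<Rightarrow> 'c" where
  "altG G x y 0 = \<one>\<^bsub>G\<^esub>"
| "altG G x y (Suc k) = x \<otimes>\<^bsub>G\<^esub> altG G y x k"

lemma altG_class:
  assumes "s \<in> S" "t \<in> S"
  shows "altG (artin_group S M) (artin_class S M [(s,True)]) (artin_class S M [(t,True)]) k
       = artin_class S M (alt_word s t k)"
  using assms
proof (induction k arbitrary: s t)
  case 0 then show ?case by (simp add: one_ag alt_word_0)
next
  case (Suc k)
  have w: "alt_word t s k \<in> words S" using Suc.prems by (auto simp: words_def alt_word_def)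
  have w1: "[(s,True)] \<in> words S" using Suc.prems by (simp add: words_def)
  show ?case using Suc mult_class[OF w1 w, of M] by (simp add: alt_word_Suc)
qed

lemma altG_carrier:
  assumes "group G" "x \<in> carrier G" "y \<in> carrier G"
  shows "altG G x y k \<in> carrier G"
  using assms by (induction k arbitrary: x y) (simp_all add: group.is_monoid monoid.m_closed monoid.one_closed)

lemma altG_hom:
  assumes "group G" "group G'" "\<phi> \<in> hom G G'" "x \<in> carrier G" "y \<in> carrier G"
  shows "\<phi> (altG G x y k) = altG G' (\<phi> x) (\<phi> y) k"
  using assms(4,5)
proof (induction k arbitrary: x y)
  case 0 then show ?case using hom_one[OF assms(3,1,2)] by simp
next
  case (Suc k)
  then show ?case using hom_mult[OF assms(3)] altG_carrier[OF assms(1)] by simp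
qed



definition rt :: "nat \<Rightarrow> complex" where
  "rt n = exp (2 * of_real pi * \<i> / of_nat n)"

lemma rt_pow: "rt n ^ k = exp (2 * of_real pi * \<i> * of_nat k / of_nat n)"
proof -
  have "rt n ^ k = exp (of_nat k * (2 * of_real pi * \<i> / of_nat n))"
    unfolding rt_def by (rule exp_of_nat_mult[symmetric])
  also have "of_nat k * (2 * of_real pi * \<i> / of_nat n) = 2 * of_real pi * \<i> * of_nat k / of_nat n"
    by (simp add: field_simps)
  finally show ?thesis .
qed

lemma rt_pow_1: "1 \<le> n \<Longrightarrow> rt n ^ k = 1 \<longleftrightarrow> n dvd k"
  unfolding rt_pow by (rule complex_root_unity_eq_1)

lemma rt_nz: "rt n \<noteq> 0" by (simp add: rt_def)

definition Kof :: "('a \<Rightarrow> 'a \<Rightarrow> enat) \<Rightarrow> nat \<Rightarrow> 'a \<Rightarrow> 'a \<Rightarrow> complex" where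
  "Kof M mm s t = (case M s t of enat n \<Rightarrow> (if even n then 0 else if mm dvd n then 1 + rt mm
       else csqrt (rt mm / rt n) * (1 + rt n)) | \<infinity> \<Rightarrow> 0)"

lemma all_braids:
  assumes cm: "coxeter_matrix S M" and mm3: "3 \<le> mm" and modd: "odd mm"
    and st: "s \<in> S" "t \<in> S" "s \<noteq> t" and Mst: "M s t = enat n"
  shows "altf (sig S (Kof M mm) (- rt mm) s) (sig S (Kof M mm) (- rt mm) t) n
       = altf (sig S (Kof M mm) (- rt mm) t) (sig S (Kof M mm) (- rt mm) s) n"
proof -
  define \<zeta> where "\<zeta> = rt mm"
  define l where "l = - \<zeta>"
  define K where "K = Kof M mm"
  have fin: "finite S" using cm by (simp add: coxeter_matrix_def)
  have Mts: "M t s = enat n" using cm st Mst by (simp add: coxeter_matrix_def)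
  have "(2::enat) \<le> enat n" using cm st Mst unfolding coxeter_matrix_def by metis
  then have n2: "2 \<le> n" by (simp add: numeral_eq_enat)
  have Ksym: "K t s = K s t" unfolding K_def Kof_def using Mst Mts by simp
  have zpow: "\<zeta>^k = 1 \<longleftrightarrow> mm dvd k" for k using rt_pow_1[of mm k] mm3 \<zeta>_def by simp
  have z1: "\<zeta> \<noteq> 1" using zpow[of 1] mm3 by auto
  have zm1: "\<zeta> \<noteq> -1"
  proof
    assume "\<zeta> = -1" then have "\<zeta>^2 = 1" by simp
    then have "mm dvd 2" using zpow by blast
    then show False using mm3 by (auto dest: dvd_imp_le)
  qed
  have model: "altf (fS l (K s t) a1) (fT l (K t s) a2) n = altf (fT l (K t s) a2) (fS l (K s t) a1) n"
    for a1 a2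
  proof (cases "even n")
    case True
    then have "K s t = 0" unfolding K_def Kof_def using Mst by simp
    then show ?thesis using model_even[OF True] Ksym by simp
  next
    case odd: False
    show ?thesis
    proof (cases "mm dvd n")
      case True
      then have "K s t = 1 - l" unfolding K_def Kof_def l_def \<zeta>_def using Mst odd by simp
      moreover have "(-l)^n = 1" using zpow True l_def by simp
      moreover have "-l \<noteq> 1" using z1 l_def by simp
      moreover have "l \<noteq> 1" using zm1 unfolding l_def by (metis minus_minus)
      ultimately show ?thesis using model_G2[of l n a1 a2] Ksym by simp
    next
      case False
      define \<eta> where "\<eta> = rt n"
      define \<mu> where "\<mu> = csqrt (\<zeta> / \<eta>)"
      have Kst: "K s t = \<mu> * (1 + \<eta>)"
        unfolding K_def Kof_def \<mu>_def \<eta>_def \<zeta>_def using Mst odd False by simp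
      have epow: "\<eta>^k = 1 \<longleftrightarrow> n dvd k" for k using rt_pow_1[of n k] n2 \<eta>_def by simp
      have e0: "\<eta> \<noteq> 0" using rt_nz \<eta>_def by simp
      have z0: "\<zeta> \<noteq> 0" using rt_nz \<zeta>_def by simp
      have e1: "\<eta> \<noteq> 1" using epow[of 1] n2 by auto
      have en: "\<eta>^n = 1" using epow by simp
      have musq: "\<mu> * \<mu> = \<zeta> / \<eta>" using power2_csqrt[of "\<zeta>/\<eta>"] \<mu>_def by (simp add: power2_eq_square)
      have mu0: "\<mu> \<noteq> 0" using musq z0 e0 by auto
      have s: "\<mu> + \<mu>*\<eta> = K s t" using Kst by (simp add: algebra_simps)
      have p: "\<mu> * (\<mu>*\<eta>) = - l" using musq e0 l_def by (simp add: mult.assoc[symmetric])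
      have ne: "\<mu> \<noteq> \<mu>*\<eta>" using mu0 e1 by simp
      have pw: "\<mu>^n = (\<mu>*\<eta>)^n" using en by (simp add: power_mult_distrib)
      have D: "(l-1)^2 \<noteq> (K s t)^2"
      proof
        assume eq: "(l-1)^2 = (K s t)^2"
        have "(K s t)^2 = (\<mu>*\<mu>) * (1+\<eta>)^2" using Kst by (simp add: power2_eq_square algebra_simps)
        also have "\<dots> = \<zeta> / \<eta> * (1+\<eta>)^2" using musq by simp
        finally have "(\<zeta>+1)^2 * \<eta> = \<zeta> * (1+\<eta>)^2" using eq e0 l_def by (simp add: field_simps power2_eq_square)
        then have "(\<zeta>*\<eta> - 1) * (\<zeta> - \<eta>) = 0" by (simp add: algebra_simps power2_eq_square)
        then have "\<zeta>*\<eta> = 1 \<or> \<zeta> = \<eta>" by auto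
        then have "\<zeta>^n = 1"
        proof
          assume "\<zeta>*\<eta> = 1" then have "(\<zeta>*\<eta>)^n = 1" by simp
          then show "\<zeta>^n = 1" using en by (simp add: power_mult_distrib)
        next
          assume "\<zeta> = \<eta>" then show "\<zeta>^n = 1" using en by simp
        qed
        then show False using zpow False by simp
      qed
      show ?thesis using model_G1[OF s p ne pw D, of a1 a2] Ksym by simp
    qed
  qed
  show ?thesis
    using pair_braid[OF fin st, of l K n] model unfolding K_def l_def \<zeta>_def by blast
qed



definition vec :: "'a \<Rightarrow> 'a \<Rightarrow> complex \<Rightarrow> complex \<Rightarrow> 'a \<Rightarrow> complex" where
  "vec b c \<mu> t = (\<lambda>u. if u = b then \<mu> + t else if u = c then t else 0)"

definition acts :: "'a \<Rightarrow> 'a \<Rightarrow> (('a \<Rightarrow> complex) \<Rightarrow> ('a \<Rightarrow> complex)) \<Rightarrow> complex \<times> complex \<Rightarrow> bool" where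
  "acts b c f x \<longleftrightarrow> (\<forall>\<mu> t. f (vec b c \<mu> t) = vec b c (\<mu> * fst x) (\<mu> * snd x + t))"

lemma sum_vec:
  assumes "finite S" "s \<in> S" "r \<in> S" "s \<noteq> r" "{s, r} = {b, c}"
  shows "(\<Sum>u\<in>S-{s}. K s u * vec b c \<mu> t u) = K s r * vec b c \<mu> t r"
proof -
  have "(\<Sum>u\<in>S-{s}. K s u * vec b c \<mu> t u) = K s r * vec b c \<mu> t r + (\<Sum>u\<in>S-{s}-{r}. K s u * vec b c \<mu> t u)"
    using assms by (subst sum.remove[of _ r]) auto
  also have "(\<Sum>u\<in>S-{s}-{r}. K s u * vec b c \<mu> t u) = 0"
    using assms(5) by (intro sum.neutral) (auto simp: vec_def doubleton_eq_iff)
  finally show ?thesis by simp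
qed

lemma acts_sig_b:
  assumes "finite S" "b \<in> S" "c \<in> S" "b \<noteq> c" "K b c = 1 - l"
  shows "acts b c (sig S K l b) (l, 0)"
  unfolding acts_def
proof (intro allI)
  fix \<mu> t
  have "(\<Sum>u\<in>S-{b}. K b u * vec b c \<mu> t u) = (1 - l) * t"
    using sum_vec[of S b c b c K \<mu> t] assms by (simp add: vec_def)
  then show "sig S K l b (vec b c \<mu> t) = vec b c (\<mu> * fst (l, 0)) (\<mu> * snd (l, 0) + t)"
    using assms by (auto simp: sig_def vec_def fun_eq_iff algebra_simps)
qed

lemma acts_sig_c:
  assumes "finite S" "b \<in> S" "c \<in> S" "b \<noteq> c" "K c b = 1 - l"
  shows "acts b c (sig S K l c) (l, 1 - l)"
  unfolding acts_def
proof (intro allI)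
  fix \<mu> t
  have "(\<Sum>u\<in>S-{c}. K c u * vec b c \<mu> t u) = (1 - l) * (\<mu> + t)"
    using sum_vec[of S c b b c K \<mu> t] assms by (simp add: vec_def insert_commute)
  then show "sig S K l c (vec b c \<mu> t) = vec b c (\<mu> * fst (l, 1 - l)) (\<mu> * snd (l, 1 - l) + t)"
    using assms by (auto simp: sig_def vec_def fun_eq_iff algebra_simps)
qed

lemma acts_sigi_b:
  assumes "finite S" "b \<in> S" "c \<in> S" "b \<noteq> c" "K b c = 1 - l" "l \<noteq> 0"
  shows "acts b c (sigi S K l b) (1/l, 0)"
  unfolding acts_def
proof (intro allI)
  fix \<mu> t
  have "(\<Sum>u\<in>S-{b}. K b u * vec b c \<mu> t u) = (1 - l) * t"
    using sum_vec[of S b c b c K \<mu> t] assms by (simp add: vec_def)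
  then show "sigi S K l b (vec b c \<mu> t) = vec b c (\<mu> * fst (1/l, 0)) (\<mu> * snd (1/l, 0) + t)"
    using assms by (auto simp: sigi_def vec_def fun_eq_iff field_simps)
qed

lemma acts_sigi_c:
  assumes "finite S" "b \<in> S" "c \<in> S" "b \<noteq> c" "K c b = 1 - l" "l \<noteq> 0"
  shows "acts b c (sigi S K l c) (1/l, -(1-l)/l)"
  unfolding acts_def
proof (intro allI)
  fix \<mu> t
  have "(\<Sum>u\<in>S-{c}. K c u * vec b c \<mu> t u) = (1 - l) * (\<mu> + t)"
    using sum_vec[of S c b b c K \<mu> t] assms by (simp add: vec_def insert_commute)
  then show "sigi S K l c (vec b c \<mu> t) = vec b c (\<mu> * fst (1/l, -(1-l)/l)) (\<mu> * snd (1/l, -(1-l)/l) + t)"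
    using assms by (auto simp: sigi_def vec_def fun_eq_iff field_simps)
qed

lemma acts_id: "acts b c id (1, 0)"
  by (simp add: acts_def)

lemma acts_comp:
  assumes "acts b c f x" "acts b c g y"
  shows "acts b c (f \<circ> g) (fst y * fst x, fst y * snd x + snd y)"
  using assms unfolding acts_def by (simp add: algebra_simps)

fun altA :: "complex \<times> complex \<Rightarrow> complex \<times> complex \<Rightarrow> nat \<Rightarrow> complex \<times> complex" where
  "altA x y 0 = (1, 0)"
| "altA x y (Suc k) = (fst (altA y x k) * fst x, fst (altA y x k) * snd x + snd (altA y x k))"

lemma acts_altf:
  assumes "acts b c f x" "acts b c g y"
  shows "acts b c (altf f g k) (altA x y k)"
  using assms
proof (induction k arbitrary: f g x y)
  case 0 then show ?case by (simp add: acts_def)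
next
  case (Suc k)
  have "acts b c (f \<circ> altf g f k) (fst (altA y x k) * fst x, fst (altA y x k) * snd x + snd (altA y x k))"
    using acts_comp[OF Suc.prems(1) Suc.IH[OF Suc.prems(2,1)]] .
  then show ?case by (simp only: altf.simps altA.simps)
qed

lemma vec_inj:
  assumes "b \<noteq> c" "vec b c \<mu> t = vec b c \<mu>' t'"
  shows "\<mu> = \<mu>' \<and> t = t'"
proof -
  have "vec b c \<mu> t c = vec b c \<mu>' t' c" "vec b c \<mu> t b = vec b c \<mu>' t' b" using assms(2) by simp_all
  then show ?thesis using assms(1) by (simp add: vec_def)
qed

lemma altA_SS: "fst (altA x y (Suc (Suc k))) = fst (altA x y k) * fst y * fst x"
  by simp

lemma altA_fst_odd: "fst (altA (m1,t1) (m2,t2) (Suc (2*j))) = m1^(Suc j) * m2^j"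
proof (induction j)
  case 0 then show ?case by simp
next
  case (Suc j)
  have e: "Suc (2 * Suc j) = Suc (Suc (Suc (2*j)))" by simp
  show ?case unfolding e altA_SS Suc.IH by (simp add: algebra_simps)
qed

lemma altA_fst_same: "fst (altA (m,t1) (m,t2) k) = m^k"
  by (induction k arbitrary: t1 t2) (simp_all add: algebra_simps)

lemma altA_diff:
  "snd (altA (m,t1) (m,t2) k) - snd (altA (m,t2) (m,t1) k) = (t1 - t2) * ((-1)^(k+1) * (\<Sum>i<k. (-m)^i))"
proof (induction k arbitrary: t1 t2)
  case 0 then show ?case by simp
next
  case (Suc k)
  have s: "(-1::complex)^k * (-1)^k = 1" by (simp add: power_mult_distrib[symmetric])
  have mm: "(-m)^k = (-1)^k * m^k" by (simp add: power_mult_distrib[symmetric])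
  have "snd (altA (m,t1) (m,t2) (Suc k)) - snd (altA (m,t2) (m,t1) (Suc k))
      = m^k * (t1 - t2) + (snd (altA (m,t2) (m,t1) k) - snd (altA (m,t1) (m,t2) k))"
    by (simp add: altA_fst_same algebra_simps)
  also have "\<dots> = m^k * (t1 - t2) + (t2 - t1) * ((-1)^(k+1) * (\<Sum>i<k. (-m)^i))"
    using Suc.IH by simp
  also have "\<dots> = (t1 - t2) * ((-1)^(Suc k+1) * (\<Sum>i<Suc k. (-m)^i))"
    using s mm by (simp add: algebra_simps)
  finally show ?case .
qed



lemma thC_mult:
  assumes inv: "\<And>u w. artin_eq S M u w \<Longrightarrow> evw S K l u = evw S K l w"
    and "A \<in> carrier (artin_group S M)" "B \<in> carrier (artin_group S M)"
  shows "thC S K l (A \<otimes>\<^bsub>artin_group S M\<^esub> B) = thC S K l A \<circ> thC S K l B"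
proof -
  obtain u v where uv: "u \<in> words S" "v \<in> words S" "A = artin_class S M u" "B = artin_class S M v"
    using assms(2,3) by (auto simp: carrier_ag)
  show ?thesis using uv mult_class[OF uv(1,2), of M] thC_class[OF inv] words_append[OF uv(1,2)]
    by simp
qed

lemma thC_one:
  assumes inv: "\<And>u w. artin_eq S M u w \<Longrightarrow> evw S K l u = evw S K l w"
  shows "thC S K l (\<one>\<^bsub>artin_group S M\<^esub>) = id"
  using thC_class[OF inv words_Nil] by (simp add: one_ag)

lemma thC_alt:
  assumes inv: "\<And>u w. artin_eq S M u w \<Longrightarrow> evw S K l u = evw S K l w"
    and "x \<in> carrier (artin_group S M)" "y \<in> carrier (artin_group S M)"
  shows "thC S K l (altG (artin_group S M) x y k) = altf (thC S K l x) (thC S K l y) k"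
  using assms(2,3)
proof (induction k arbitrary: x y)
  case 0 then show ?case using thC_one[OF inv] by simp
next
  case (Suc k)
  have c: "altG (artin_group S M) y x k \<in> carrier (artin_group S M)"
    using altG_carrier[OF group_ag Suc.prems(2,1)] .
  show ?case using thC_mult[OF inv Suc.prems(1) c] Suc.IH[OF Suc.prems(2,1)] by simp
qed

lemma altG_upd: "altG (G\<lparr>carrier := H\<rparr>) x y k = altG G x y k"
  by (induction k arbitrary: x y) simp_all

lemma inv_gen:
  assumes "s \<in> S"
  shows "inv\<^bsub>artin_group S M\<^esub> (artin_class S M [(s,True)]) = artin_class S M [(s,False)]"
proof (rule group.inv_equality[OF group_ag])
  have w: "[(s,True)] \<in> words S" "[(s,False)] \<in> words S" using assms by (simp_all add: words_def)
  have "artin_eq S M ([] @ [(s,False), inv_letter (s,False)] @ []) ([] @ [])" by (rule artin_eq.cancel)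
  then have "artin_class S M [(s,False), (s,True)] = artin_class S M []"
    by (intro class_eq) (simp add: inv_letter_def)
  then show "artin_class S M [(s,False)] \<otimes>\<^bsub>artin_group S M\<^esub> artin_class S M [(s,True)] = \<one>\<^bsub>artin_group S M\<^esub>"
    using mult_class[OF w(2,1), of M] by (simp add: one_ag)
  show "artin_class S M [(s,True)] \<in> carrier (artin_group S M)" "artin_class S M [(s,False)] \<in> carrier (artin_group S M)"
    using w by (simp_all add: carrier_ag)
qed



lemma aff_step:
  assumes eq: "altA (m,t0) (l,t1) n = altA (l,t1) (m,t0) n" and "odd n" "m \<noteq> 0" "l \<noteq> 0"
    and S0: "(\<Sum>i<n. (-l)^i) \<noteq> 0"
  shows "m = l \<and> t0 = t1"
proof -
  obtain j where n: "n = Suc (2*j)" using \<open>odd n\<close> by (metis oddE Suc_eq_plus1)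
  have "m^(Suc j) * l^j = l^(Suc j) * m^j"
    using arg_cong[OF eq, of fst] unfolding n altA_fst_odd .
  then have "(m^j * l^j) * m = (m^j * l^j) * l" by (simp add: algebra_simps)
  moreover have "m^j * l^j \<noteq> 0" using assms(3,4) by simp
  ultimately have ml: "m = l" by (metis mult_left_cancel)
  have "snd (altA (l,t0) (l,t1) n) - snd (altA (l,t1) (l,t0) n) = 0"
    using arg_cong[OF eq, of snd] ml by simp
  then have "(t0 - t1) * ((-1)^(n+1) * (\<Sum>i<n. (-l)^i)) = 0" using altA_diff[of l t0 t1 n] by simp
  moreover have "(-1::complex)^(n+1) = 1" using \<open>odd n\<close> by simp
  ultimately have "t0 = t1" using S0 by simp
  with ml show ?thesis by simp
qed

lemma ex_acts: "acts b c f (m,t) \<Longrightarrow> m \<noteq> 0 \<Longrightarrow> \<exists>m t0. m \<noteq> 0 \<and> acts b c f (m,t0)"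
  by blast

theorem lemma3p4:
  fixes S :: "'a set" and M :: "'a \<Rightarrow> 'a \<Rightarrow> enat" and a b c :: 'a
  assumes "coxeter_matrix S M"
    and "parabolic_retractable S M"
    and "a \<in> S" "b \<in> S" "c \<in> S"
    and "a \<noteq> b" "a \<noteq> c" "b \<noteq> c"
    and "odd_entry (M a b)" "odd_entry (M a c)" "odd_entry (M b c)"
  shows "the_enat (M b c) dvd the_enat (M a b) \<or> the_enat (M b c) dvd the_enat (M a c)"
proof -
  note cm = assms(1)
  obtain p where p: "M a b = enat p" "odd p" using assms(9) by (auto simp: odd_entry_def)
  obtain q where q: "M a c = enat q" "odd q" using assms(10) by (auto simp: odd_entry_def)
  obtain mm where mm: "M b c = enat mm" "odd mm" using assms(11) by (auto simp: odd_entry_def)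
  have fin: "finite S" using cm by (simp add: coxeter_matrix_def)
  have "(2::enat) \<le> enat mm" using cm assms(4,5,8) mm(1) unfolding coxeter_matrix_def by metis
  then have "2 \<le> mm" by (simp add: numeral_eq_enat)
  with mm(2) have mm3: "3 \<le> mm" by presburger
  have Mcb: "M c b = enat mm" using cm assms(4,5,8) mm(1) unfolding coxeter_matrix_def by metis
  have "mm dvd p \<or> mm dvd q"
  proof (rule ccontr)
    assume nd: "\<not> (mm dvd p \<or> mm dvd q)"
    define \<zeta> where "\<zeta> = rt mm"
    define l where "l = - \<zeta>"
    define K where "K = Kof M mm"
    have zpow: "\<zeta>^k = 1 \<longleftrightarrow> mm dvd k" for k using rt_pow_1[of mm k] mm3 \<zeta>_def by simp
    have z0: "\<zeta> \<noteq> 0" using rt_nz \<zeta>_def by simp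
    have l0: "l \<noteq> 0" using z0 l_def by simp
    have zm1: "\<zeta> \<noteq> -1"
    proof
      assume "\<zeta> = -1" then have "\<zeta>^2 = 1" by simp
      then have "mm dvd 2" using zpow by blast
      then show False using mm3 by (auto dest: dvd_imp_le)
    qed
    have l1: "l \<noteq> 1" using zm1 unfolding l_def by (metis minus_minus)
    have br: "altf (sig S K l s) (sig S K l t) m = altf (sig S K l t) (sig S K l s) m"
      if "s \<in> S" "t \<in> S" "s \<noteq> t" "M s t = enat m" for s t m
      unfolding K_def l_def \<zeta>_def by (rule all_braids[OF cm mm3 mm(2) that])
    have evinv: "evw S K l u = evw S K l w" if "artin_eq S M u w" for u w
      by (rule evw_inv[of l S M K, OF l0 br that])
    have Kbc: "K b c = 1 - l" unfolding K_def Kof_def l_def \<zeta>_def using mm by simp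
    have Kcb: "K c b = 1 - l" unfolding K_def Kof_def l_def \<zeta>_def using Mcb mm by simp
    have Sne: "(\<Sum>i<n. (-l)^i) \<noteq> 0" if "\<not> mm dvd n" for n
    proof
      assume "(\<Sum>i<n. (-l)^i) = 0"
      then have "(\<Sum>i<n. \<zeta>^i) = 0" using l_def by simp
      then have "1 - \<zeta>^n = 0" using one_diff_power_eq[of \<zeta> n] by simp
      then show False using zpow that by simp
    qed
    have grp: "group (artin_group S M)" by (rule group_ag)
    define gb where "gb = artin_class S M [(b,True)]"
    define gc where "gc = artin_class S M [(c,True)]"
    define ga where "ga = artin_class S M [(a,True)]"
    have wd: "[(s,True)] \<in> words S" if "s \<in> S" for s using that by (simp add: words_def)
    have gC: "artin_class S M [(s,True)] \<in> carrier (artin_group S M)" if "s \<in> S" for s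
      using wd[OF that] by (simp add: carrier_ag)
    have thg: "thC S K l (artin_class S M [(s,True)]) = sig S K l s" if "s \<in> S" for s
      using thC_class[OF evinv wd[OF that]] by (simp add: ev_def)
    have gsub: "{gb, gc} \<subseteq> carrier (artin_group S M)" using gC assms(4,5) gb_def gc_def by simp
    define H where "H = parabolic S M {b,c}"
    have Hdef: "H = generate (artin_group S M) {gb, gc}"
      unfolding H_def parabolic_def artin_gen_def gb_def gc_def by simp
    have Hsub: "subgroup H (artin_group S M)" unfolding Hdef by (rule group.generate_is_subgroup[OF grp gsub])
    have grpH: "group ((artin_group S M)\<lparr>carrier := H\<rparr>)" by (rule group.subgroup_imp_group[OF grp Hsub])
    have HC: "H \<subseteq> carrier (artin_group S M)" unfolding Hdef by (rule group.generate_incl[OF grp gsub])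
    have bcS: "{b,c} \<subseteq> S" using assms(4,5) by simp
    obtain \<phi> where ret: "is_retraction (artin_group S M) H \<phi>"
      using assms(2)[unfolded parabolic_retractable_def, rule_format, OF bcS] unfolding H_def by blast
    have hom: "\<phi> \<in> hom (artin_group S M) ((artin_group S M)\<lparr>carrier := H\<rparr>)"
      and fx: "\<And>h. h \<in> H \<Longrightarrow> \<phi> h = h" using ret by (auto simp: is_retraction_def)
    have gbH: "gb \<in> H" unfolding Hdef by (rule generate.incl) simp
    have gcH: "gc \<in> H" unfolding Hdef by (rule generate.incl) simp
    have hH: "\<phi> ga \<in> H" using hom gC[OF assms(3)] ga_def by (auto simp: hom_def Pi_def)
    define T where "T = thC S K l (\<phi> ga)"
    have key: "altf T (sig S K l s) n = altf (sig S K l s) T n"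
      if s: "s \<in> S" "a \<noteq> s" "M a s = enat n" "\<phi> (artin_class S M [(s,True)]) = artin_class S M [(s,True)]"
      for s n
    proof -
      define gs where "gs = artin_class S M [(s,True)]"
      have "artin_eq S M ([] @ alt_word a s n @ []) ([] @ alt_word s a n @ [])"
        using artin_eq.braid[of a S s M n "[]" "[]"] s assms(3) by simp
      then have "artin_class S M (alt_word a s n) = artin_class S M (alt_word s a n)"
        by (intro class_eq) simp
      then have "altG (artin_group S M) ga gs n = altG (artin_group S M) gs ga n"
        using altG_class[OF assms(3) s(1), of M n] altG_class[OF s(1) assms(3), of M n] ga_def gs_def
        by simp
      then have "\<phi> (altG (artin_group S M) ga gs n) = \<phi> (altG (artin_group S M) gs ga n)" by simp
      then have "altG (artin_group S M) (\<phi> ga) gs n = altG (artin_group S M) gs (\<phi> ga) n"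
        using altG_hom[OF grp grpH hom gC[OF assms(3)] gC[OF s(1)], of n]
          altG_hom[OF grp grpH hom gC[OF s(1)] gC[OF assms(3)], of n] s(4) ga_def gs_def
        by (simp add: altG_upd)
      then have "thC S K l (altG (artin_group S M) (\<phi> ga) gs n) = thC S K l (altG (artin_group S M) gs (\<phi> ga) n)"
        by simp
      moreover have "\<phi> ga \<in> carrier (artin_group S M)" using hH HC by blast
      moreover have "gs \<in> carrier (artin_group S M)" using gC[OF s(1)] gs_def by simp
      ultimately have "altf (thC S K l (\<phi> ga)) (thC S K l gs) n = altf (thC S K l gs) (thC S K l (\<phi> ga)) n"
        using thC_alt[OF evinv, where x="\<phi> ga" and y=gs and k=n] thC_alt[OF evinv, where x=gs and y="\<phi> ga" and k=n] by simp
      then show ?thesis using thg[OF s(1)] gs_def T_def by simp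
    qed
    have PH: "\<exists>m t0. m \<noteq> 0 \<and> acts b c (thC S K l h) (m, t0)" if "h \<in> generate (artin_group S M) {gb, gc}" for h
      using that
    proof (induction rule: generate.induct)
      case one
      have "acts b c (thC S K l \<one>\<^bsub>artin_group S M\<^esub>) (1, 0)"
        using acts_id[of b c] thC_one[OF evinv] by simp
      moreover have "(1::complex) \<noteq> 0" by simp
      ultimately show ?case by (intro exI[where x="1::complex"] exI[where x="0::complex"] conjI)
    next
      case (incl h)
      then have "h = gb \<or> h = gc" by simp
      then show ?case
      proof
        assume "h = gb"
        then have "thC S K l h = sig S K l b" using thg[OF assms(4)] gb_def by simp
        then show ?thesis using ex_acts[OF acts_sig_b[where K=K and l=l, OF fin assms(4,5,8) Kbc]] l0 by simp
      next
        assume "h = gc"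
        then have "thC S K l h = sig S K l c" using thg[OF assms(5)] gc_def by simp
        then show ?thesis using ex_acts[OF acts_sig_c[where K=K and l=l, OF fin assms(4,5,8) Kcb]] l0 by simp
      qed
    next
      case (inv h)
      then have "h = gb \<or> h = gc" by simp
      then show ?case
      proof
        assume "h = gb"
        then have "inv\<^bsub>artin_group S M\<^esub> h = artin_class S M [(b,False)]"
          using inv_gen[OF assms(4)] gb_def by simp
        moreover have "thC S K l (artin_class S M [(b,False)]) = sigi S K l b"
          using thC_class[OF evinv, where w="[(b,False)]"] assms(4) by (simp add: words_def ev_def)
        ultimately show ?thesis using ex_acts[OF acts_sigi_b[where K=K and l=l, OF fin assms(4,5,8) Kbc l0]] l0 by simp
      next
        assume "h = gc"
        then have "inv\<^bsub>artin_group S M\<^esub> h = artin_class S M [(c,False)]"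
          using inv_gen[OF assms(5)] gc_def by simp
        moreover have "thC S K l (artin_class S M [(c,False)]) = sigi S K l c"
          using thC_class[OF evinv, where w="[(c,False)]"] assms(5) by (simp add: words_def ev_def)
        ultimately show ?thesis using ex_acts[OF acts_sigi_c[where K=K and l=l, OF fin assms(4,5,8) Kcb l0]] l0 by simp
      qed
    next
      case (eng h1 h2)
      obtain m1 t1 where 1: "m1 \<noteq> 0" "acts b c (thC S K l h1) (m1, t1)" using eng.IH(1) by blast
      obtain m2 t2 where 2: "m2 \<noteq> 0" "acts b c (thC S K l h2) (m2, t2)" using eng.IH(2) by blast
      have c1: "h1 \<in> carrier (artin_group S M)" using group.generate_in_carrier[OF grp gsub eng.hyps(1)] .
      have c2: "h2 \<in> carrier (artin_group S M)" using group.generate_in_carrier[OF grp gsub eng.hyps(2)] .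
      have "acts b c (thC S K l h1 \<circ> thC S K l h2) (m2 * m1, m2 * t1 + t2)"
        using acts_comp[OF 1(2) 2(2)] by simp
      then have "acts b c (thC S K l (h1 \<otimes>\<^bsub>artin_group S M\<^esub> h2)) (m2 * m1, m2 * t1 + t2)"
        using thC_mult[OF evinv c1 c2] by simp
      moreover have "m2 * m1 \<noteq> 0" using 1(1) 2(1) by simp
      ultimately show ?case by (rule ex_acts)
    qed
    obtain m t0 where mt: "m \<noteq> 0" "acts b c T (m, t0)" using PH hH Hdef T_def by blast
    have sb: "acts b c (sig S K l b) (l, 0)" by (rule acts_sig_b[where K=K and l=l, OF fin assms(4,5,8) Kbc])
    have sc: "acts b c (sig S K l c) (l, 1 - l)" by (rule acts_sig_c[where K=K and l=l, OF fin assms(4,5,8) Kcb])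
    have app: "altA (m,t0) y n = altA y (m,t0) n"
      if "acts b c g y" "altf T g n = altf g T n" for g y n
    proof -
      have A: "acts b c (altf T g n) (altA (m,t0) y n)" by (rule acts_altf[OF mt(2) that(1)])
      have B: "acts b c (altf g T n) (altA y (m,t0) n)" by (rule acts_altf[OF that(1) mt(2)])
      have A1: "altf T g n (vec b c 1 0) = vec b c (fst (altA (m,t0) y n)) (snd (altA (m,t0) y n))"
        using A unfolding acts_def by (metis mult_1 add_0_right)
      have B1: "altf g T n (vec b c 1 0) = vec b c (fst (altA y (m,t0) n)) (snd (altA y (m,t0) n))"
        using B unfolding acts_def by (metis mult_1 add_0_right)
      have "vec b c (fst (altA (m,t0) y n)) (snd (altA (m,t0) y n)) = vec b c (fst (altA y (m,t0) n)) (snd (altA y (m,t0) n))"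
        using A1 B1 that(2) by simp
      then show ?thesis using vec_inj[OF assms(8)] by (simp add: prod_eq_iff)
    qed
    have eb: "altA (m,t0) (l,0) p = altA (l,0) (m,t0) p"
      using app[OF sb key[OF assms(4,6) p(1) fx[OF gbH[unfolded gb_def]]]] .
    have ec: "altA (m,t0) (l,1-l) q = altA (l,1-l) (m,t0) q"
      using app[OF sc key[OF assms(5,7) q(1) fx[OF gcH[unfolded gc_def]]]] .
    have "t0 = 0" using aff_step[OF eb p(2) mt(1) l0 Sne] nd by blast
    moreover have "t0 = 1 - l" using aff_step[OF ec q(2) mt(1) l0 Sne] nd by blast
    ultimately show False using l1 by simp
  qed
  then show ?thesis using p mm q by simp
qed


end
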